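(* If a graph $G$ is $M$-fat $n$-bottlenecked for some $M,n\in\mathbb N$, then the natural map $f:G\to G_{M,M}$ (for any root $x_0$) is a quasi-isometry.
   Context: All graphs are connected (and unbounded); multi-edges are allowed; $d$ is the graph metric on vertices. Sets $X,Y$ are $M$-disjoint if $d(x,y)>M$ for all $x\in X,y\in Y$; $X$ is $M$-connected if any two of its points are joined by a finite sequence in $X$ with consecutive distances $\le M$; $N_M(S)=\{y:d(s,y)<M\text{ for some }s\in S\}$. $G$ is $M$-fat $n$-bottlenecked if for any two connected $M$-disjoint subgraphs $X,Y\subset G$ there is $S\subset V(G)\setminus(V(X)\cup V(Y))$ with $|S|=n$ such that every path from a vertex of $X$ to a vertex of $Y$ meets $N_M(S)$. Skeleton $G_{\lambda,k}$ (root $x_0\in V(G)$, scale $\lambda\ge1$, connectivity $k\ge1$): layers $A_{N,\lambda}=\{x: N\lambda<d(x,x_0)\le(N+1)\lambda\}$, $N\in\mathbb Z$; blocks are the maximal $k$-connected subsets of layers; $G_{\lambda,k}$ has a vertex per block and an edge between two blocks iff an edge of $G$ joins a vertex of one to a vertex of the other. The natural map $f$ sends each vertex of $G$ to (the vertex corresponding to) its block. A map $f$ is a quasi-isometry if there are $a\ge1,b\ge0$ with $\frac1a d(x,y)-b\le d(f(x),f(y))\le a d(x,y)+b$ (and a quasi-isometric embedding in the other direction exists). *)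

theory Defs
  imports Complex_Main
begin

(* A graph is given by a vertex set V and a symmetric edge relation E \<subseteq> V \<times> V.
   Multi-edges do not affect the metric or the skeleton, so they are not recorded. *)

definition is_walk :: "('a \<times> 'a) set \<Rightarrow> 'a list \<Rightarrow> bool" where
  "is_walk E xs \<longleftrightarrow> xs \<noteq> [] \<and> successively (\<lambda>u v. (u, v) \<in> E) xs"

definition is_path :: "('a \<times> 'a) set \<Rightarrow> 'a list \<Rightarrow> bool" where
  "is_path E xs \<longleftrightarrow> is_walk E xs \<and> distinct xs"

definition gdist :: "('a \<times> 'a) set \<Rightarrow> 'a \<Rightarrow> 'a \<Rightarrow> nat" where
  "gdist E x y = (LEAST n. \<exists>xs. is_walk E xs \<and> hd xs = x \<and> last xs = y \<and> length xs = Suc n)"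

definition connected_graph :: "'a set \<Rightarrow> ('a \<times> 'a) set \<Rightarrow> bool" where
  "connected_graph V E \<longleftrightarrow> V \<noteq> {} \<and>
     (\<forall>x\<in>V. \<forall>y\<in>V. \<exists>xs. is_walk E xs \<and> hd xs = x \<and> last xs = y)"

definition graph :: "'a set \<Rightarrow> ('a \<times> 'a) set \<Rightarrow> bool" where
  "graph V E \<longleftrightarrow> E \<subseteq> V \<times> V \<and> sym E \<and> connected_graph V E \<and>
     (\<forall>r::nat. \<exists>x\<in>V. \<exists>y\<in>V. gdist E x y > r)"

definition subgraph :: "'a set \<Rightarrow> ('a \<times> 'a) set \<Rightarrow> 'a set \<Rightarrow> ('a \<times> 'a) set \<Rightarrow> bool" where
  "subgraph V' E' V E \<longleftrightarrow> V' \<subseteq> V \<and> E' \<subseteq> E \<and> E' \<subseteq> V' \<times> V'"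

definition M_disjoint :: "('a \<times> 'a) set \<Rightarrow> nat \<Rightarrow> 'a set \<Rightarrow> 'a set \<Rightarrow> bool" where
  "M_disjoint E M X Y \<longleftrightarrow> (\<forall>x\<in>X. \<forall>y\<in>Y. gdist E x y > M)"

definition nbhd :: "'a set \<Rightarrow> ('a \<times> 'a) set \<Rightarrow> nat \<Rightarrow> 'a set \<Rightarrow> 'a set" where
  "nbhd V E M S = {y\<in>V. \<exists>s\<in>S. gdist E s y < M}"

definition fat_bottlenecked :: "'a set \<Rightarrow> ('a \<times> 'a) set \<Rightarrow> nat \<Rightarrow> nat \<Rightarrow> bool" where
  "fat_bottlenecked V E M n \<longleftrightarrow>
    (\<forall>VX EdX VY EdY. subgraph VX EdX V E \<and> connected_graph VX EdX \<and>
                    subgraph VY EdY V E \<and> connected_graph VY EdY \<and> M_disjoint E M VX VY \<longrightarrow>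
       (\<exists>S. S \<subseteq> V - (VX \<union> VY) \<and> finite S \<and> card S = n \<and>
            (\<forall>xs. is_path E xs \<and> hd xs \<in> VX \<and> last xs \<in> VY \<longrightarrow>
                  (\<exists>v\<in>set xs. v \<in> nbhd V E M S))))"

definition layer :: "'a set \<Rightarrow> ('a \<times> 'a) set \<Rightarrow> 'a \<Rightarrow> nat \<Rightarrow> int \<Rightarrow> 'a set" where
  "layer V E x0 lam N = {x\<in>V. N * int lam < int (gdist E x x0) \<and> int (gdist E x x0) \<le> (N + 1) * int lam}"

definition k_connected :: "('a \<times> 'a) set \<Rightarrow> nat \<Rightarrow> 'a set \<Rightarrow> bool" where
  "k_connected E k X \<longleftrightarrow> (\<forall>x\<in>X. \<forall>y\<in>X. \<exists>xs. xs \<noteq> [] \<and> hd xs = x \<and> last xs = y \<and>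
      set xs \<subseteq> X \<and> successively (\<lambda>u v. gdist E u v \<le> k) xs)"

definition is_block :: "'a set \<Rightarrow> ('a \<times> 'a) set \<Rightarrow> 'a \<Rightarrow> nat \<Rightarrow> nat \<Rightarrow> 'a set \<Rightarrow> bool" where
  "is_block V E x0 lam k B \<longleftrightarrow> (\<exists>N. B \<noteq> {} \<and> B \<subseteq> layer V E x0 lam N \<and> k_connected E k B \<and>
      (\<forall>C. B \<subseteq> C \<and> C \<subseteq> layer V E x0 lam N \<and> k_connected E k C \<longrightarrow> C = B))"

definition skel_V :: "'a set \<Rightarrow> ('a \<times> 'a) set \<Rightarrow> 'a \<Rightarrow> nat \<Rightarrow> nat \<Rightarrow> 'a set set" where
  "skel_V V E x0 lam k = {B. is_block V E x0 lam k B}"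

definition skel_E :: "'a set \<Rightarrow> ('a \<times> 'a) set \<Rightarrow> 'a \<Rightarrow> nat \<Rightarrow> nat \<Rightarrow> ('a set \<times> 'a set) set" where
  "skel_E V E x0 lam k = {(B, C). B \<in> skel_V V E x0 lam k \<and> C \<in> skel_V V E x0 lam k \<and>
      (\<exists>x\<in>B. \<exists>y\<in>C. (x, y) \<in> E)}"

definition skel_map :: "'a set \<Rightarrow> ('a \<times> 'a) set \<Rightarrow> 'a \<Rightarrow> nat \<Rightarrow> nat \<Rightarrow> 'a \<Rightarrow> 'a set" where
  "skel_map V E x0 lam k x = (THE B. is_block V E x0 lam k B \<and> x \<in> B)"

definition qi_embedding ::
  "'a set \<Rightarrow> ('a \<times> 'a) set \<Rightarrow> 'b set \<Rightarrow> ('b \<times> 'b) set \<Rightarrow> ('a \<Rightarrow> 'b) \<Rightarrow> bool" where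
  "qi_embedding VA EA VB EB f \<longleftrightarrow> f ` VA \<subseteq> VB \<and>
     (\<exists>a b::real. a \<ge> 1 \<and> b \<ge> 0 \<and> (\<forall>x\<in>VA. \<forall>y\<in>VA.
        real (gdist EA x y) / a - b \<le> real (gdist EB (f x) (f y)) \<and>
        real (gdist EB (f x) (f y)) \<le> a * real (gdist EA x y) + b))"

definition quasi_isometry ::
  "'a set \<Rightarrow> ('a \<times> 'a) set \<Rightarrow> 'b set \<Rightarrow> ('b \<times> 'b) set \<Rightarrow> ('a \<Rightarrow> 'b) \<Rightarrow> bool" where
  "quasi_isometry VA EA VB EB f \<longleftrightarrow> qi_embedding VA EA VB EB f \<and>
     (\<exists>g. qi_embedding VB EB VA EA g)"

end

theory Submission
  imports Defs
begin



definition reach :: "('a \<times> 'a) set \<Rightarrow> 'a \<Rightarrow> 'a \<Rightarrow> bool" where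
  "reach E x y \<longleftrightarrow> (\<exists>xs. is_walk E xs \<and> hd xs = x \<and> last xs = y)"

lemma walk_take:
  assumes "is_walk E xs" "i < length xs"
  shows "is_walk E (take (Suc i) xs) \<and> hd (take (Suc i) xs) = hd xs \<and> last (take (Suc i) xs) = xs ! i"
proof -
  have ne: "xs \<noteq> []" using assms(2) by auto
  have "successively (\<lambda>u v. (u, v) \<in> E) (take (Suc i) xs)"
    using assms unfolding is_walk_def successively_conv_nth by auto
  moreover have "take (Suc i) xs \<noteq> []" using ne by simp
  moreover have "hd (take (Suc i) xs) = hd xs" using ne by (cases xs) auto
  moreover have "last (take (Suc i) xs) = xs ! i" using assms(2)
    by (simp add: take_Suc_conv_app_nth)
  ultimately show ?thesis unfolding is_walk_def by auto
qed

lemma walk_drop: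
  assumes "is_walk E xs" "i < length xs"
  shows "is_walk E (drop i xs) \<and> hd (drop i xs) = xs ! i \<and> last (drop i xs) = last xs"
proof -
  have "successively (\<lambda>u v. (u, v) \<in> E) (drop i xs)"
    using assms unfolding is_walk_def successively_conv_nth by auto
  moreover have "drop i xs \<noteq> []" using assms(2) by simp
  moreover have "hd (drop i xs) = xs ! i" using assms(2) by (simp add: hd_drop_conv_nth)
  moreover have "last (drop i xs) = last xs" using assms(2) by simp
  ultimately show ?thesis unfolding is_walk_def by auto
qed

lemma walk_append:
  assumes "is_walk E xs" "is_walk E ys" "last xs = hd ys"
  shows "is_walk E (xs @ tl ys) \<and> hd (xs @ tl ys) = hd xs \<and> last (xs @ tl ys) = last ys
     \<and> length (xs @ tl ys) = length xs + length ys - 1"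
proof -
  obtain y ys' where ys: "ys = y # ys'" using assms(2) unfolding is_walk_def by (cases ys) auto
  have xs: "xs \<noteq> []" using assms(1) unfolding is_walk_def by auto
  have "xs @ tl ys = butlast xs @ (last xs # ys')" using xs ys by simp
  have s1: "successively (\<lambda>u v. (u, v) \<in> E) xs" "successively (\<lambda>u v. (u, v) \<in> E) ys"
    using assms unfolding is_walk_def by auto
  have "successively (\<lambda>u v. (u, v) \<in> E) (xs @ ys')"
    using s1 ys xs assms(3) by (auto simp: successively_append_iff successively_Cons)
  then show ?thesis using xs ys assms(3) unfolding is_walk_def by (auto simp: last_append)
qed

lemma walk_rev:
  assumes "sym E" "is_walk E xs"
  shows "is_walk E (rev xs)"
  using assms unfolding is_walk_def
  by (auto intro: successively_mono simp: sym_def)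

lemma walk_restrict:
  assumes "is_walk E xs" "set xs \<subseteq> U"
  shows "is_walk (E \<inter> U \<times> U) xs"
  using assms unfolding is_walk_def
  by (auto intro: successively_mono)

lemma walk_restrict_set:
  assumes "is_walk (E \<inter> U \<times> U) xs" "hd xs \<in> U"
  shows "set xs \<subseteq> U"
proof -
  have "successively (\<lambda>u v. (u, v) \<in> E \<inter> U \<times> U) xs" "xs \<noteq> []"
    using assms unfolding is_walk_def by auto
  then show ?thesis using assms(2)
    by (induction xs rule: induct_list012) auto
qed

lemma walk_sub:
  assumes "is_walk E' xs" "E' \<subseteq> E"
  shows "is_walk E xs"
  using assms unfolding is_walk_def by (auto intro: successively_mono)

lemma gdist_le:
  assumes "is_walk E xs" "hd xs = x" "last xs = y"
  shows "gdist E x y \<le> length xs - 1"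
proof -
  have "xs \<noteq> []" using assms unfolding is_walk_def by auto
  then have "length xs = Suc (length xs - 1)" by simp
  then show ?thesis unfolding gdist_def using assms by (intro Least_le) metis
qed

lemma gdist_wit:
  assumes "reach E x y"
  shows "\<exists>xs. is_walk E xs \<and> hd xs = x \<and> last xs = y \<and> length xs = Suc (gdist E x y)"
proof -
  obtain xs where xs: "is_walk E xs" "hd xs = x" "last xs = y" using assms unfolding reach_def by auto
  have "xs \<noteq> []" using xs unfolding is_walk_def by auto
  then have "length xs = Suc (length xs - 1)" by simp
  then have "\<exists>n xs. is_walk E xs \<and> hd xs = x \<and> last xs = y \<and> length xs = Suc n" using xs by metis
  then show ?thesis unfolding gdist_def by (rule LeastI_ex)
qed

lemma gdist_refl: "gdist E x x = 0"
proof -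
  have "is_walk E [x]" unfolding is_walk_def by simp
  from gdist_le[OF this] show ?thesis by simp
qed

lemma reach_refl: "reach E x x"
  unfolding reach_def is_walk_def by (rule exI[of _ "[x]"]) simp

lemma reach_trans: "reach E x y \<Longrightarrow> reach E y z \<Longrightarrow> reach E x z"
  unfolding reach_def using walk_append by metis

lemma reach_sym: "sym E \<Longrightarrow> reach E x y \<Longrightarrow> reach E y x"
  unfolding reach_def using walk_rev by (metis hd_rev last_rev)

lemma gdist_triangle:
  assumes "reach E x y" "reach E y z"
  shows "gdist E x z \<le> gdist E x y + gdist E y z"
proof -
  obtain xs where xs: "is_walk E xs" "hd xs = x" "last xs = y" "length xs = Suc (gdist E x y)"
    using gdist_wit[OF assms(1)] by auto
  obtain ys where ys: "is_walk E ys" "hd ys = y" "last ys = z" "length ys = Suc (gdist E y z)"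
    using gdist_wit[OF assms(2)] by auto
  have "is_walk E (xs @ tl ys) \<and> hd (xs @ tl ys) = hd xs \<and> last (xs @ tl ys) = last ys
     \<and> length (xs @ tl ys) = length xs + length ys - 1"
    using walk_append[OF xs(1) ys(1)] xs ys by simp
  then have "gdist E x z \<le> length (xs @ tl ys) - 1" using gdist_le xs ys by metis
  then show ?thesis using xs ys by simp
qed

lemma gdist_sym:
  assumes "sym E" "reach E x y"
  shows "gdist E x y = gdist E y x"
proof -
  have le: "gdist E a b \<le> gdist E b a" if rb: "reach E b a" for a b
  proof -
    obtain xs where xs: "is_walk E xs" "hd xs = b" "last xs = a" "length xs = Suc (gdist E b a)"
      using gdist_wit[OF rb] by auto
    have "is_walk E (rev xs)" using walk_rev[OF assms(1) xs(1)] .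
    from gdist_le[OF this] xs show ?thesis by (simp add: hd_rev last_rev)
  qed
  show ?thesis using le[of y x] le[of x y] assms reach_sym by (metis antisym)
qed

lemma geodesic:
  assumes "is_walk E ws" "hd ws = a" "last ws = b" "length ws = Suc (gdist E a b)" "j < length ws"
  shows "gdist E a (ws ! j) \<le> j" "gdist E (ws ! j) b = gdist E a b - j"
    "reach E a (ws ! j)" "reach E (ws ! j) b"
proof -
  have t: "is_walk E (take (Suc j) ws) \<and> hd (take (Suc j) ws) = hd ws \<and> last (take (Suc j) ws) = ws ! j"
    using walk_take[OF assms(1,5)] .
  show "gdist E a (ws ! j) \<le> j" using gdist_le[of E "take (Suc j) ws"] t assms by simp
  have d: "is_walk E (drop j ws) \<and> hd (drop j ws) = ws ! j \<and> last (drop j ws) = last ws"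
    using walk_drop[OF assms(1,5)] .
  have u: "gdist E (ws ! j) b \<le> gdist E a b - j" using gdist_le[of E "drop j ws"] d assms by simp
  show r1: "reach E a (ws ! j)" using t assms unfolding reach_def by metis
  show r2: "reach E (ws ! j) b" using d assms unfolding reach_def by metis
  have "gdist E a b \<le> gdist E a (ws ! j) + gdist E (ws ! j) b" using gdist_triangle[OF r1 r2] .
  moreover have "gdist E a (ws ! j) \<le> j" using gdist_le[of E "take (Suc j) ws"] t assms by simp
  ultimately show "gdist E (ws ! j) b = gdist E a b - j" using u by linarith
qed




definition chain :: "('a \<Rightarrow> 'a \<Rightarrow> bool) \<Rightarrow> 'a set \<Rightarrow> 'a \<Rightarrow> 'a \<Rightarrow> bool" where
  "chain R A x y \<longleftrightarrow> (\<exists>zs. zs \<noteq> [] \<and> hd zs = x \<and> last zs = y \<and> set zs \<subseteq> A \<and> successively R zs)"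

lemma k_connected_chain: "k_connected E k X \<longleftrightarrow> (\<forall>x\<in>X. \<forall>y\<in>X. chain (\<lambda>u v. gdist E u v \<le> k) X x y)"
  unfolding k_connected_def chain_def by blast

lemma chain_refl: "x \<in> A \<Longrightarrow> chain R A x x"
  unfolding chain_def by (rule exI[of _ "[x]"]) simp

lemma chain_trans:
  assumes "chain R A x y" "chain R A y z" shows "chain R A x z"
proof -
  obtain xs where xs: "xs \<noteq> []" "hd xs = x" "last xs = y" "set xs \<subseteq> A" "successively R xs"
    using assms(1) unfolding chain_def by auto
  obtain ys where ys: "ys \<noteq> []" "hd ys = y" "last ys = z" "set ys \<subseteq> A" "successively R ys"
    using assms(2) unfolding chain_def by auto
  obtain y' ys' where yy: "ys = y' # ys'" using ys(1) by (cases ys) auto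
  have "successively R (xs @ ys')"
    using xs ys yy by (auto simp: successively_append_iff successively_Cons)
  moreover have "last (xs @ ys') = z" using xs ys yy by (auto simp: last_append)
  ultimately show ?thesis unfolding chain_def using xs ys yy
    by (intro exI[of _ "xs @ ys'"]) auto
qed

lemma chain_sym:
  assumes "chain R A x y" "\<And>u v. u \<in> A \<Longrightarrow> v \<in> A \<Longrightarrow> R u v \<Longrightarrow> R v u"
  shows "chain R A y x"
proof -
  obtain xs where xs: "xs \<noteq> []" "hd xs = x" "last xs = y" "set xs \<subseteq> A" "successively R xs"
    using assms(1) unfolding chain_def by auto
  have "successively (\<lambda>x y. R y x) xs"
    by (rule successively_mono[OF xs(5)]) (use xs(4) assms(2) in blast)
  then have "successively R (rev xs)" by simp
  then show ?thesis unfolding chain_def using xs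
    by (intro exI[of _ "rev xs"]) (auto simp: hd_rev last_rev)
qed

lemma chain_mono: "chain R A x y \<Longrightarrow> A \<subseteq> A' \<Longrightarrow> chain R A' x y"
  unfolding chain_def by blast

lemma chain_prefix:
  assumes "zs \<noteq> []" "hd zs = x" "set zs \<subseteq> A" "successively R zs" "z \<in> set zs"
  shows "chain R A x z"
proof -
  obtain i where i: "i < length zs" "zs ! i = z" using assms(5) by (auto simp: in_set_conv_nth)
  have "successively R (take (Suc i) zs)"
    using assms(4) unfolding successively_conv_nth by auto
  moreover have "last (take (Suc i) zs) = z" using i by (simp add: take_Suc_conv_app_nth)
  moreover have "hd (take (Suc i) zs) = x" using assms(1,2) by simp
  moreover have "set (take (Suc i) zs) \<subseteq> A" using assms(3) set_take_subset by fast
  moreover have "take (Suc i) zs \<noteq> []" using assms(1) by simp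
  ultimately show ?thesis unfolding chain_def by (intro exI[of _ "take (Suc i) zs"]) auto
qed

lemma chain_in_set:
  assumes "chain R A x y"
  shows "\<exists>zs. zs \<noteq> [] \<and> hd zs = x \<and> last zs = y \<and> set zs \<subseteq> {z. chain R A x z} \<and> successively R zs"
proof -
  obtain zs where zs: "zs \<noteq> []" "hd zs = x" "last zs = y" "set zs \<subseteq> A" "successively R zs"
    using assms unfolding chain_def by auto
  then show ?thesis using chain_prefix[OF zs(1,2,4,5)] by (intro exI[of _ zs]) auto
qed

lemma layer_exists:
  assumes "x \<in> V" "(M::nat) \<ge> 1"
  shows "x \<in> layer V E x0 M ((int (gdist E x x0) - 1) div int M)"
proof -
  define l where "l = int (gdist E x x0)"
  define N where "N = (l - 1) div int M"
  have m: "(l - 1) mod int M < int M" "0 \<le> (l - 1) mod int M" using assms by auto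
  have e: "N * int M + (l - 1) mod int M = l - 1" unfolding N_def
    by (metis div_mult_mod_eq)
  have "N * int M < l" "l \<le> (N + 1) * int M" using m e by (auto simp: algebra_simps)
  then show ?thesis using assms unfolding layer_def l_def N_def by auto
qed

lemma layer_unique:
  assumes "x \<in> layer V E x0 M N" "x \<in> layer V E x0 M N'" "(M::nat) \<ge> 1"
  shows "N = N'"
proof (rule ccontr)
  assume "N \<noteq> N'"
  then have "N + 1 \<le> N' \<or> N' + 1 \<le> N" by auto
  then have "(N + 1) * int M \<le> N' * int M \<or> (N' + 1) * int M \<le> N * int M"
    by (auto intro: mult_right_mono)
  moreover have "N * int M < int (gdist E x x0)" "int (gdist E x x0) \<le> (N + 1) * int M"
     "N' * int M < int (gdist E x x0)" "int (gdist E x x0) \<le> (N' + 1) * int M"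
    using assms unfolding layer_def by auto
  ultimately show False by linarith
qed

lemma layer_sub: "layer V E x0 M N \<subseteq> V"
  unfolding layer_def by auto




context
  fixes V :: "'a set" and E :: "('a \<times> 'a) set" and x0 :: 'a and M :: nat
  assumes G: "graph V E" and M1: "M \<ge> 1" and x0V: "x0 \<in> V"
begin

lemma reachV: "x \<in> V \<Longrightarrow> y \<in> V \<Longrightarrow> reach E x y"
  using G unfolding graph_def connected_graph_def reach_def by blast

lemma symE: "sym E" using G unfolding graph_def by auto

lemma EV: "(u, v) \<in> E \<Longrightarrow> u \<in> V \<and> v \<in> V" using G unfolding graph_def by auto

lemma gsym: "x \<in> V \<Longrightarrow> y \<in> V \<Longrightarrow> gdist E x y = gdist E y x"
  using gdist_sym[OF symE reachV] .

lemma gtri: "x \<in> V \<Longrightarrow> y \<in> V \<Longrightarrow> z \<in> V \<Longrightarrow> gdist E x z \<le> gdist E x y + gdist E y z"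
  using gdist_triangle reachV by metis

definition lN :: "'a \<Rightarrow> int" where "lN x = (int (gdist E x x0) - 1) div int M"

definition comp :: "'a \<Rightarrow> 'a set" where
  "comp x = {y. chain (\<lambda>u v. gdist E u v \<le> M) (layer V E x0 M (lN x)) x y}"

lemma x_layer: "x \<in> V \<Longrightarrow> x \<in> layer V E x0 M (lN x)"
  unfolding lN_def using layer_exists M1 by metis

lemma chain_last_in: "chain R A x y \<Longrightarrow> y \<in> A \<and> x \<in> A"
  unfolding chain_def by (metis hd_in_set last_in_set subsetD)

lemma comp_sub: "comp x \<subseteq> layer V E x0 M (lN x)"
  unfolding comp_def using chain_last_in by fast

lemma Rsym: "A \<subseteq> V \<Longrightarrow> u \<in> A \<Longrightarrow> v \<in> A \<Longrightarrow> gdist E u v \<le> M \<Longrightarrow> gdist E v u \<le> M"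
  using gsym by (metis subsetD)

lemma comp_block:
  assumes "x \<in> V"
  shows "is_block V E x0 M M (comp x) \<and> x \<in> comp x"
proof -
  let ?R = "\<lambda>u v. gdist E u v \<le> M"
  let ?L = "layer V E x0 M (lN x)"
  have xL: "x \<in> ?L" using x_layer[OF assms] .
  have xc: "x \<in> comp x" unfolding comp_def using chain_refl[OF xL] by simp
  have csub: "comp x \<subseteq> V" using comp_sub[of x] layer_sub[of V E x0 M "lN x"] by (rule subset_trans)
  have ch: "chain ?R (comp x) x y" if yc: "y \<in> comp x" for y
  proof -
    obtain zs where "zs \<noteq> [] \<and> hd zs = x \<and> last zs = y \<and> set zs \<subseteq> {z. chain ?R ?L x z} \<and> successively ?R zs"
      using chain_in_set[of ?R ?L x y] yc unfolding comp_def by auto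
    then show ?thesis unfolding chain_def comp_def by (intro exI[of _ zs]) simp
  qed
  have kc: "k_connected E M (comp x)"
    unfolding k_connected_chain
  proof (intro ballI)
    fix y y' assume "y \<in> comp x" "y' \<in> comp x"
    have "chain ?R (comp x) y x" by (rule chain_sym[OF ch[OF \<open>y \<in> comp x\<close>]]) (rule Rsym[OF csub])
    then show "chain ?R (comp x) y y'" using chain_trans ch[OF \<open>y' \<in> comp x\<close>] by fast
  qed
  have mx: "C = comp x" if "comp x \<subseteq> C" "C \<subseteq> ?L" "k_connected E M C" for C
  proof
    show "C \<subseteq> comp x"
    proof
      fix y assume "y \<in> C"
      moreover have "x \<in> C" using that(1) xc by blast
      ultimately have cc: "chain ?R C x y" using that(3) unfolding k_connected_chain by blast
      show "y \<in> comp x" using chain_mono[OF cc that(2)] unfolding comp_def by simp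
    qed
  qed (rule that(1))
  have "comp x \<noteq> {}" using xc by blast
  then show ?thesis unfolding is_block_def using xc comp_sub[of x] kc mx
    by (intro conjI exI[of _ "lN x"]) simp_all
qed

lemma block_eq:
  assumes "is_block V E x0 M M B" "x \<in> B"
  shows "B = comp x"
proof -
  let ?R = "\<lambda>u v. gdist E u v \<le> M"
  obtain N where B0: "B \<noteq> {}" "B \<subseteq> layer V E x0 M N" "k_connected E M B"
    "\<forall>C. B \<subseteq> C \<and> C \<subseteq> layer V E x0 M N \<and> k_connected E M C \<longrightarrow> C = B"
    using assms(1) unfolding is_block_def by (elim exE conjE) 
  have xV: "x \<in> V" using B0(2) assms(2) layer_sub by fast
  have xN: "x \<in> layer V E x0 M N" using B0(2) assms(2) by (rule subsetD)
  have N: "N = lN x" by (rule layer_unique[OF xN x_layer[OF xV] M1])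
  have sub: "B \<subseteq> comp x"
  proof
    fix y assume "y \<in> B"
    then have cc: "chain ?R B x y" using B0(3) assms(2) unfolding k_connected_chain by blast
    show "y \<in> comp x" using chain_mono[OF cc B0(2)] N unfolding comp_def by simp
  qed
  have kc: "k_connected E M (comp x)" and cs: "comp x \<subseteq> layer V E x0 M N"
    using comp_block[OF xV] comp_sub[of x] N unfolding is_block_def by auto
  have "comp x = B" using B0(4) sub kc cs by blast
  then show ?thesis by simp
qed

abbreviation f where "f \<equiv> skel_map V E x0 M M"

lemma f_eq: "x \<in> V \<Longrightarrow> f x = comp x"
  unfolding skel_map_def
  apply (rule the_equality)
   apply (erule comp_block)
  apply (erule conjE)
  apply (erule block_eq)
  apply assumption
  done

lemma f_in: "x \<in> V \<Longrightarrow> f x \<in> skel_V V E x0 M M \<and> x \<in> f x"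
proof -
  assume "x \<in> V"
  then show ?thesis using f_eq[of x] comp_block[of x] unfolding skel_V_def by simp
qed

lemma block_subV: "B \<in> skel_V V E x0 M M \<Longrightarrow> B \<subseteq> V"
proof -
  assume "B \<in> skel_V V E x0 M M"
  then obtain N where "B \<subseteq> layer V E x0 M N" unfolding skel_V_def is_block_def by auto
  then show ?thesis using layer_sub[of V E x0 M N] by (rule subset_trans)
qed

lemma f_block: "B \<in> skel_V V E x0 M M \<Longrightarrow> x \<in> B \<Longrightarrow> f x = B"
proof -
  assume a: "B \<in> skel_V V E x0 M M" "x \<in> B"
  have xV: "x \<in> V" using block_subV[OF a(1)] a(2) by (rule subsetD)
  have "B = comp x" using a unfolding skel_V_def by (simp add: block_eq)
  then show ?thesis using f_eq[OF xV] by simp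
qed

lemma f_edge: "(u, v) \<in> E \<Longrightarrow> (f u, f v) \<in> skel_E V E x0 M M"
proof -
  assume e: "(u, v) \<in> E"
  then have "u \<in> V" "v \<in> V" using EV by auto
  then have "f u \<in> skel_V V E x0 M M \<and> u \<in> f u" "f v \<in> skel_V V E x0 M M \<and> v \<in> f v"
    using f_in by auto
  then show ?thesis unfolding skel_E_def using e by auto
qed

lemma f_walk: "is_walk E xs \<Longrightarrow> is_walk (skel_E V E x0 M M) (map f xs)"
  unfolding is_walk_def successively_map
  apply (intro conjI)
   apply simp
  apply (erule conjE)
  apply (erule successively_mono)
  apply (erule f_edge)
  done

lemma f_dist:
  assumes "x \<in> V" "y \<in> V"
  shows "gdist (skel_E V E x0 M M) (f x) (f y) \<le> gdist E x y \<and> reach (skel_E V E x0 M M) (f x) (f y)"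
proof -
  obtain xs where xs: "is_walk E xs" "hd xs = x" "last xs = y" "length xs = Suc (gdist E x y)"
    using gdist_wit[OF reachV[OF assms]] by auto
  have ne: "xs \<noteq> []" using xs unfolding is_walk_def by auto
  have w: "is_walk (skel_E V E x0 M M) (map f xs)" using f_walk[OF xs(1)] .
  have h: "hd (map f xs) = f x" "last (map f xs) = f y" using ne xs by (auto simp: hd_map last_map)
  have "gdist (skel_E V E x0 M M) (f x) (f y) \<le> length (map f xs) - 1"
    by (rule gdist_le[OF w h])
  moreover have "reach (skel_E V E x0 M M) (f x) (f y)" unfolding reach_def using w h by blast
  ultimately show ?thesis using xs(4) by simp
qed

lemma skel_last:
  "is_walk (skel_E V E x0 M M) Bs \<Longrightarrow> hd Bs \<in> skel_V V E x0 M M \<Longrightarrow> last Bs \<in> skel_V V E x0 M M"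
proof (induction Bs rule: induct_list012)
  case (3 x y zs)
  then show ?case unfolding is_walk_def skel_E_def by auto
qed (auto simp: is_walk_def)

lemma skel_lower:
  assumes D: "\<And>B x y. B \<in> skel_V V E x0 M M \<Longrightarrow> x \<in> B \<Longrightarrow> y \<in> B \<Longrightarrow> gdist E x y \<le> D"
  shows "is_walk (skel_E V E x0 M M) Bs \<Longrightarrow> hd Bs \<in> skel_V V E x0 M M \<Longrightarrow> x \<in> hd Bs \<Longrightarrow> y \<in> last Bs
     \<Longrightarrow> gdist E x y \<le> (D + 1) * (length Bs - 1) + D"
proof (induction Bs arbitrary: x)
  case Nil then show ?case unfolding is_walk_def by simp
next
  case (Cons B Bs)
  have BV: "B \<in> skel_V V E x0 M M" and xB: "x \<in> B" using Cons.prems(2,3) by simp_all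
  show ?case
  proof (cases "Bs = []")
    case True
    then show ?thesis using Cons.prems(4) D[OF BV xB] by simp
  next
    case False
    then obtain C Cs where BsC: "Bs = C # Cs" by (cases Bs) auto
    have e: "(B, C) \<in> skel_E V E x0 M M" and w: "is_walk (skel_E V E x0 M M) Bs"
      using Cons.prems(1) BsC unfolding is_walk_def by auto
    obtain u v where uv: "u \<in> B" "v \<in> C" "(u, v) \<in> E" "C \<in> skel_V V E x0 M M"
      using e unfolding skel_E_def by auto
    have yl: "y \<in> last Bs" using Cons.prems(4) False by simp
    have IH: "gdist E v y \<le> (D + 1) * (length Bs - 1) + D"
      using Cons.IH[OF w] uv(2,4) BsC yl by simp
    have xV: "x \<in> V" using BV xB block_subV by auto
    have uV: "u \<in> V" "v \<in> V" using uv(3) EV by auto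
    have "last Bs \<in> skel_V V E x0 M M" using skel_last[OF w] uv(4) BsC by simp
    then have yV: "y \<in> V" using yl block_subV by auto
    have "gdist E u v \<le> 1" using gdist_le[of E "[u, v]" u v] uv unfolding is_walk_def by simp
    have "gdist E x y \<le> gdist E x u + gdist E u y" using gtri xV uV yV by blast
    also have "\<dots> \<le> gdist E x u + (gdist E u v + gdist E v y)" using gtri uV yV by auto
    also have "\<dots> \<le> D + (1 + ((D + 1) * (length Bs - 1) + D))"
      using D[OF BV xB uv(1)] \<open>gdist E u v \<le> 1\<close> IH by simp
    finally show ?thesis using BsC by (simp add: algebra_simps)
  qed
qed

end



lemma real_aux:
  fixes d ds D :: nat
  assumes "d \<le> (D + 1) * ds + D"
  shows "real d / real (D + 1) - real D \<le> real ds"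
proof -
  have "real d \<le> real ((D + 1) * ds + D)"
    using assms by (simp only: of_nat_le_iff)
  also have "\<dots> \<le> real (D + 1) * (real ds + real D)" by (simp add: algebra_simps)
  finally have "real d \<le> real (D + 1) * (real ds + real D)" .
  then have "real d / real (D + 1) \<le> real ds + real D"
    by (simp add: divide_le_eq mult.commute)
  then show ?thesis by simp
qed

lemma real_aux2:
  fixes ds d D :: nat
  assumes "ds \<le> d"
  shows "real ds / real (D + 1) - real D \<le> real d"
proof -
  have "real ds / real (D + 1) \<le> real ds / 1"
    by (rule divide_left_mono) auto
  then show ?thesis using assms by linarith
qed

context
  fixes V :: "'a set" and E :: "('a \<times> 'a) set" and x0 :: 'a and M :: nat
  assumes G: "graph V E" and M1: "M \<ge> 1" and x0V: "x0 \<in> V"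
begin

lemma qi_from_diam:
  assumes D: "\<And>B x y. B \<in> skel_V V E x0 M M \<Longrightarrow> x \<in> B \<Longrightarrow> y \<in> B \<Longrightarrow> gdist E x y \<le> D"
  shows "quasi_isometry V E (skel_V V E x0 M M) (skel_E V E x0 M M) (skel_map V E x0 M M)"
proof -
  let ?f = "skel_map V E x0 M M"
  let ?SE = "skel_E V E x0 M M"
  let ?SV = "skel_V V E x0 M M"
  have key: "gdist ?SE (?f x) (?f y) \<le> gdist E x y \<and> gdist E x y \<le> (D + 1) * gdist ?SE (?f x) (?f y) + D"
    if xy: "x \<in> V" "y \<in> V" for x y
  proof -
    have fd: "gdist ?SE (?f x) (?f y) \<le> gdist E x y" "reach ?SE (?f x) (?f y)"
      using f_dist[OF G M1 x0V xy] by auto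
    obtain Bs where Bs: "is_walk ?SE Bs" "hd Bs = ?f x" "last Bs = ?f y" "length Bs = Suc (gdist ?SE (?f x) (?f y))"
      using gdist_wit[OF fd(2)] by blast
    have "gdist E x y \<le> (D + 1) * (length Bs - 1) + D"
      using skel_lower[OF G M1 x0V D Bs(1)] Bs(2,3) f_in[OF G M1 x0V xy(1)] f_in[OF G M1 x0V xy(2)] by simp
    then show ?thesis using fd Bs(4) by simp
  qed
  have fV: "?f ` V \<subseteq> ?SV"
  proof
    fix B assume "B \<in> ?f ` V"
    then obtain x where "x \<in> V" "B = ?f x" by blast
    then show "B \<in> ?SV" using f_in[OF G M1 x0V] by simp
  qed
  have b1: "\<forall>x\<in>V. \<forall>y\<in>V. real (gdist E x y) / real (D + 1) - real D \<le> real (gdist ?SE (?f x) (?f y)) \<and>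
      real (gdist ?SE (?f x) (?f y)) \<le> real (D + 1) * real (gdist E x y) + real D"
  proof (intro ballI conjI)
    fix x y assume xy: "x \<in> V" "y \<in> V"
    from key[OF xy] have k: "gdist ?SE (?f x) (?f y) \<le> gdist E x y" "gdist E x y \<le> (D + 1) * gdist ?SE (?f x) (?f y) + D" by auto
    show "real (gdist E x y) / real (D + 1) - real D \<le> real (gdist ?SE (?f x) (?f y))"
      using real_aux[OF k(2)] .
    have "real (gdist ?SE (?f x) (?f y)) \<le> real (gdist E x y)" using k(1) by simp
    also have "\<dots> \<le> real (D + 1) * real (gdist E x y) + real D" by (simp add: algebra_simps)
    finally show "real (gdist ?SE (?f x) (?f y)) \<le> real (D + 1) * real (gdist E x y) + real D" .
  qed
  have q1: "qi_embedding V E ?SV ?SE ?f"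
    unfolding qi_embedding_def
    apply (rule conjI, rule fV)
    apply (rule exI[of _ "real (D + 1)"], rule exI[of _ "real D"])
    using b1 by simp
  define g where "g = (\<lambda>B::'a set. SOME x. x \<in> B)"
  have gB: "g B \<in> B \<and> g B \<in> V \<and> ?f (g B) = B" if "B \<in> ?SV" for B
  proof -
    have "B \<noteq> {}" using that unfolding skel_V_def is_block_def by auto
    then have "\<exists>x. x \<in> B" by blast
    then have "g B \<in> B" unfolding g_def by (rule someI_ex)
    then show ?thesis using block_subV[OF G M1 x0V that] f_block[OF G M1 x0V that] by auto
  qed
  have gV: "g ` ?SV \<subseteq> V"
  proof
    fix x assume "x \<in> g ` ?SV"
    then obtain B where "B \<in> ?SV" "x = g B" by blast
    then show "x \<in> V" using gB by simp
  qed
  have b2: "\<forall>B\<in>?SV. \<forall>C\<in>?SV. real (gdist ?SE B C) / real (D + 1) - real D \<le> real (gdist E (g B) (g C)) \<and>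
      real (gdist E (g B) (g C)) \<le> real (D + 1) * real (gdist ?SE B C) + real D"
  proof (intro ballI conjI)
    fix B C assume BC: "B \<in> ?SV" "C \<in> ?SV"
    have e: "?f (g B) = B" "?f (g C) = C" "g B \<in> V" "g C \<in> V" using gB BC by auto
    from key[OF e(3,4)] e(1,2)
    have k: "gdist ?SE B C \<le> gdist E (g B) (g C)" "gdist E (g B) (g C) \<le> (D + 1) * gdist ?SE B C + D" by auto
    show "real (gdist ?SE B C) / real (D + 1) - real D \<le> real (gdist E (g B) (g C))"
      using real_aux2[OF k(1)] .
    have "real (gdist E (g B) (g C)) \<le> real ((D + 1) * gdist ?SE B C + D)"
      using k(2) by (simp only: of_nat_le_iff)
    then show "real (gdist E (g B) (g C)) \<le> real (D + 1) * real (gdist ?SE B C) + real D"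
      by (simp add: algebra_simps)
  qed
  have q2: "qi_embedding ?SV ?SE V E g"
    unfolding qi_embedding_def
    apply (rule conjI, rule gV)
    apply (rule exI[of _ "real (D + 1)"], rule exI[of _ "real D"])
    using b2 by simp
  show ?thesis unfolding quasi_isometry_def using q1 q2 by blast
qed

end



lemma succ_closed:
  assumes "successively R zs" "zs \<noteq> []" "hd zs \<in> A"
    "\<And>u v. u \<in> set zs \<Longrightarrow> v \<in> set zs \<Longrightarrow> R u v \<Longrightarrow> u \<in> A \<Longrightarrow> v \<in> A"
  shows "set zs \<subseteq> A"
  using assms
proof (induction zs rule: induct_list012)
  case (3 x y zs)
  have "R x y" using "3.prems"(1) by simp
  then have "y \<in> A" using "3.prems"(3) "3.prems"(4)[of x y] by simp
  moreover have "successively R (y # zs)" using "3.prems"(1) by simp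
  moreover have "\<And>u v. u \<in> set (y # zs) \<Longrightarrow> v \<in> set (y # zs) \<Longrightarrow> R u v \<Longrightarrow> u \<in> A \<Longrightarrow> v \<in> A"
    using "3.prems"(4) by (metis list.set_intros(2))
  ultimately have "set (y # zs) \<subseteq> A" using "3.IH"(2) by simp
  then show ?case using "3.prems"(3) by simp
qed auto

lemma disc_ivt:
  fixes F :: "'a \<Rightarrow> nat"
  assumes "successively (\<lambda>u v. F v \<le> F u + M) zs" "zs \<noteq> []" "F (hd zs) \<le> t" "t \<le> F (last zs)" "0 < M"
  shows "\<exists>z\<in>set zs. t \<le> F z \<and> F z < t + M"
  using assms
proof (induction zs rule: induct_list012)
  case (2 x) then show ?case by auto
next
  case (3 x y zs)
  show ?case
  proof (cases "t \<le> F x")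
    case True then show ?thesis using "3.prems" by auto
  next
    case False
    then have fx: "F x < t" by simp
    have fy: "F y \<le> F x + M" using "3.prems"(1) by simp
    show ?thesis
    proof (cases "t \<le> F y")
      case True then show ?thesis using fx fy by auto
    next
      case False
      have "\<exists>z\<in>set (y # zs). t \<le> F z \<and> F z < t + M"
        using "3.IH"(2) "3.prems" False by simp
      then show ?thesis by auto
    qed
  qed
qed simp

lemma star_connected:
  assumes "sym E'" "c \<in> A" "\<And>v. v \<in> A \<Longrightarrow> reach E' v c"
  shows "connected_graph A E'"
  unfolding connected_graph_def
proof (intro conjI ballI)
  show "A \<noteq> {}" using assms(2) by blast
  fix x y assume "x \<in> A" "y \<in> A"
  then have "reach E' x y" using assms reach_trans reach_sym by metis
  then show "\<exists>xs. is_walk E' xs \<and> hd xs = x \<and> last xs = y" unfolding reach_def .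
qed

lemma sym_restrict: "sym E \<Longrightarrow> sym (E \<inter> A \<times> A)"
  unfolding sym_def by blast

context
  fixes V :: "'a set" and E :: "('a \<times> 'a) set" and x0 :: 'a and M :: nat
  assumes G: "graph V E" and M1: "M \<ge> 1" and x0V: "x0 \<in> V"
begin

lemma rV: "x \<in> V \<Longrightarrow> y \<in> V \<Longrightarrow> reach E x y" by (rule reachV[OF G M1 x0V])
lemma sE: "sym E" by (rule symE[OF G M1 x0V])
lemma eV: "(u, v) \<in> E \<Longrightarrow> u \<in> V \<and> v \<in> V" by (rule EV[OF G M1 x0V])
lemma gs: "x \<in> V \<Longrightarrow> y \<in> V \<Longrightarrow> gdist E x y = gdist E y x" by (rule gsym[OF G M1 x0V])
lemma gt: "x \<in> V \<Longrightarrow> y \<in> V \<Longrightarrow> z \<in> V \<Longrightarrow> gdist E x z \<le> gdist E x y + gdist E y z"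
  by (rule gtri[OF G M1 x0V])

lemma walkV: "is_walk E ws \<Longrightarrow> hd ws \<in> V \<Longrightarrow> set ws \<subseteq> V"
proof -
  assume a: "is_walk E ws" "hd ws \<in> V"
  have "E \<inter> V \<times> V = E" using G unfolding graph_def by auto
  then have "is_walk (E \<inter> V \<times> V) ws" using a(1) by simp
  then show ?thesis using walk_restrict_set a(2) by metis
qed

lemma geo_path:
  assumes wV: "w \<in> V" and a: "a \<le> gdist E w x0"
  obtains P where "is_path E P" "hd P \<in> V" "gdist E (hd P) x0 = a" "last P = w"
    "\<And>v. v \<in> set P \<Longrightarrow> gdist E w v \<le> gdist E w x0 - a \<and> v \<in> V \<and> a \<le> gdist E v x0"
proof -
  obtain ws where ws: "is_walk E ws" "hd ws = w" "last ws = x0" "length ws = Suc (gdist E w x0)"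
    using gdist_wit[OF rV[OF wV x0V]] by blast
  have wsV: "set ws \<subseteq> V" using walkV ws wV by simp
  define j0 where "j0 = gdist E w x0 - a"
  have j0l: "j0 < length ws" using ws(4) unfolding j0_def by simp
  have lvj: "gdist E (ws ! j) x0 = gdist E w x0 - j" if "j < length ws" for j
    using geodesic(2)[OF ws that] .
  have dj: "gdist E w (ws ! j) \<le> j" if "j < length ws" for j
    using geodesic(1)[OF ws that] .
  have dist: "distinct ws"
    unfolding distinct_conv_nth
  proof (intro allI impI)
    fix i j assume "i < length ws" "j < length ws" "i \<noteq> j"
    then have "gdist E (ws ! i) x0 \<noteq> gdist E (ws ! j) x0" using lvj ws(4) by auto
    then show "ws ! i \<noteq> ws ! j" by auto
  qed
  define P where "P = rev (take (Suc j0) ws)"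
  have t: "is_walk E (take (Suc j0) ws) \<and> hd (take (Suc j0) ws) = hd ws \<and> last (take (Suc j0) ws) = ws ! j0"
    using walk_take[OF ws(1) j0l] .
  have pw: "is_path E P" unfolding P_def is_path_def using walk_rev[OF sE] t dist by (simp add: distinct_take)
  have ne: "take (Suc j0) ws \<noteq> []" using t unfolding is_walk_def by simp
  have hdP: "hd P = ws ! j0" unfolding P_def using t ne by (simp add: hd_rev)
  have lastP: "last P = w" unfolding P_def using t ne ws(2) by (simp add: last_rev)
  have hdV: "hd P \<in> V" using hdP wsV j0l by auto
  have hdl: "gdist E (hd P) x0 = a" using hdP lvj[OF j0l] a unfolding j0_def by simp
  have sP: "gdist E w v \<le> gdist E w x0 - a \<and> v \<in> V \<and> a \<le> gdist E v x0" if "v \<in> set P" for v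
  proof -
    have "v \<in> set (take (Suc j0) ws)" using that unfolding P_def by simp
    then obtain j where j: "j < length (take (Suc j0) ws)" "take (Suc j0) ws ! j = v"
      by (auto simp: in_set_conv_nth)
    have jj: "j \<le> j0" "j < length ws" using j(1) by auto
    have v: "v = ws ! j" using j by simp
    show ?thesis using dj[OF jj(2)] lvj[OF jj(2)] jj wsV v a unfolding j0_def by auto
  qed
  show ?thesis using that pw hdV hdl lastP sP by blast
qed

end

context
  fixes V :: "'a set" and E :: "('a \<times> 'a) set" and x0 :: 'a and M n :: nat
  assumes G: "graph V E" and M1: "M \<ge> 1" and x0V: "x0 \<in> V" and FB: "fat_bottlenecked V E M n"
begin

lemma no_spread:
  assumes U_def: "U = {v\<in>V. a + M < gdist E v x0}"
    and xV: "x \<in> V" and xU: "a + M < gdist E x x0"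
    and w: "\<And>k. k \<le> n \<Longrightarrow> reach (E \<inter> U \<times> U) x (w k) \<and> gdist E (w k) x0 \<le> a + 3 * M"
    and sep: "\<And>k l. k \<le> n \<Longrightarrow> l \<le> n \<Longrightarrow> k \<noteq> l \<Longrightarrow> 8 * M < gdist E (w k) (w l)"
  shows False
proof -
  note rV = rV[OF G M1 x0V] and sE = sE[OF G M1 x0V] and gs = gs[OF G M1 x0V] and gt = gt[OF G M1 x0V]
    and walkV = walkV[OF G M1 x0V] and geo_path = geo_path[OF G M1 x0V]
  define XV where "XV = {v\<in>V. gdist E v x0 \<le> a}"
  define XE where "XE = E \<inter> XV \<times> XV"
  define YV where "YV = {v. reach (E \<inter> U \<times> U) x v}"
  define YE where "YE = E \<inter> YV \<times> YV"
  have xU': "x \<in> U" using xV xU U_def by simp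
  have YU: "YV \<subseteq> U"
  proof
    fix v assume "v \<in> YV"
    then obtain ws where ws: "is_walk (E \<inter> U \<times> U) ws" "hd ws = x" "last ws = v"
      unfolding YV_def reach_def by blast
    have "set ws \<subseteq> U" using walk_restrict_set[OF ws(1)] ws(2) xU' by simp
    moreover have "ws \<noteq> []" using ws(1) unfolding is_walk_def by simp
    ultimately show "v \<in> U" using ws(3) last_in_set by blast
  qed
  have UV: "U \<subseteq> V" using U_def by blast
  have XVV: "XV \<subseteq> V" using XV_def by blast
  have subX: "subgraph XV XE V E" unfolding subgraph_def XE_def using XVV by blast
  have subY: "subgraph YV YE V E" unfolding subgraph_def YE_def using YU UV by blast
  have x0X: "x0 \<in> XV" unfolding XV_def using x0V gdist_refl[of E x0] by simp
  have conX: "connected_graph XV XE"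
  proof (rule star_connected[OF _ x0X])
    show "sym XE" unfolding XE_def by (rule sym_restrict[OF sE])
    fix v assume vX: "v \<in> XV"
    then have vV: "v \<in> V" using XVV by blast
    obtain ws where ws: "is_walk E ws" "hd ws = v" "last ws = x0" "length ws = Suc (gdist E v x0)"
      using gdist_wit[OF rV[OF vV x0V]] by blast
    have "set ws \<subseteq> XV"
    proof
      fix z assume "z \<in> set ws"
      then obtain j where j: "j < length ws" "ws ! j = z" by (auto simp: in_set_conv_nth)
      have "gdist E z x0 = gdist E v x0 - j" using geodesic(2)[OF ws j(1)] j(2) by simp
      moreover have "z \<in> V" using walkV[OF ws(1)] ws(2) vV \<open>z \<in> set ws\<close> by auto
      ultimately show "z \<in> XV" using vX unfolding XV_def by auto
    qed
    then have "is_walk XE ws" unfolding XE_def by (rule walk_restrict[OF ws(1)])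
    then show "reach XE v x0" unfolding reach_def using ws by blast
  qed
  have xY: "x \<in> YV" unfolding YV_def using reach_refl by simp
  have conY: "connected_graph YV YE"
  proof (rule star_connected[OF _ xY])
    show sY: "sym YE" unfolding YE_def by (rule sym_restrict[OF sE])
    fix v assume "v \<in> YV"
    then obtain ws where ws: "is_walk (E \<inter> U \<times> U) ws" "hd ws = x" "last ws = v"
      unfolding YV_def reach_def by blast
    have "set ws \<subseteq> YV"
    proof
      fix z assume "z \<in> set ws"
      then obtain j where j: "j < length ws" "ws ! j = z" by (auto simp: in_set_conv_nth)
      have "is_walk (E \<inter> U \<times> U) (take (Suc j) ws) \<and> hd (take (Suc j) ws) = hd ws \<and> last (take (Suc j) ws) = ws ! j"
        by (rule walk_take[OF ws(1) j(1)])
      then show "z \<in> YV" unfolding YV_def reach_def using ws(2) j(2) by blast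
    qed
    then have "is_walk ((E \<inter> U \<times> U) \<inter> YV \<times> YV) ws" by (rule walk_restrict[OF ws(1)])
    then have "is_walk YE ws" unfolding YE_def by (rule walk_sub) blast
    then have "reach YE x v" unfolding reach_def using ws by blast
    then show "reach YE v x" by (rule reach_sym[OF sY])
  qed
  have disj: "M_disjoint E M XV YV"
    unfolding M_disjoint_def
  proof (intro ballI)
    fix p q assume p: "p \<in> XV" and q: "q \<in> YV"
    have pV: "p \<in> V" and lp: "gdist E p x0 \<le> a" using p XV_def by auto
    have qU: "q \<in> U" using q YU by blast
    then have qV: "q \<in> V" and lq: "a + M < gdist E q x0" using U_def by auto
    have "gdist E q x0 \<le> gdist E q p + gdist E p x0" using gt[OF qV pV x0V] .
    moreover have "gdist E q p = gdist E p q" using gs[OF qV pV] .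
    ultimately show "M < gdist E p q" using lp lq by linarith
  qed
  have ex: "\<exists>S. S \<subseteq> V - (XV \<union> YV) \<and> finite S \<and> card S = n \<and>
            (\<forall>xs. is_path E xs \<and> hd xs \<in> XV \<and> last xs \<in> YV \<longrightarrow>
                  (\<exists>v\<in>set xs. v \<in> nbhd V E M S))"
    using FB unfolding fat_bottlenecked_def
    apply -
    apply (erule allE[of _ XV], erule allE[of _ XE], erule allE[of _ YV], erule allE[of _ YE])
    apply (erule mp)
    apply (intro conjI subX conX subY conY disj)
    done
  then obtain S where S0: "S \<subseteq> V - (XV \<union> YV)" "finite S" "card S = n"
    "\<forall>xs. is_path E xs \<and> hd xs \<in> XV \<and> last xs \<in> YV \<longrightarrow> (\<exists>v\<in>set xs. v \<in> nbhd V E M S)"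
    by (elim exE conjE)
  have S: "S \<subseteq> V - (XV \<union> YV)" "finite S" "card S = n"
    "\<And>xs. is_path E xs \<Longrightarrow> hd xs \<in> XV \<Longrightarrow> last xs \<in> YV \<Longrightarrow> \<exists>v\<in>set xs. v \<in> nbhd V E M S"
    using S0 by auto
  have wY: "w k \<in> YV" "w k \<in> V" "a + M < gdist E (w k) x0" "gdist E (w k) x0 \<le> a + 3 * M"
    if "k \<le> n" for k
  proof -
    show wy: "w k \<in> YV" using w[OF that] unfolding YV_def by simp
    then show "w k \<in> V" "a + M < gdist E (w k) x0" using YU U_def by auto
    show "gdist E (w k) x0 \<le> a + 3 * M" using w[OF that] by simp
  qed
  have hit: "\<exists>s\<in>S. \<exists>v\<in>V. gdist E s v < M \<and> gdist E (w k) v \<le> 3 * M" if k: "k \<le> n" for k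
  proof -
    have al: "a \<le> gdist E (w k) x0" using wY(3)[OF k] by simp
    obtain P where P: "is_path E P" "hd P \<in> V" "gdist E (hd P) x0 = a" "last P = w k"
      "\<And>v. v \<in> set P \<Longrightarrow> gdist E (w k) v \<le> gdist E (w k) x0 - a \<and> v \<in> V \<and> a \<le> gdist E v x0"
      using geo_path[OF wY(2)[OF k] al] by blast
    have "hd P \<in> XV" using P(2,3) unfolding XV_def by simp
    moreover have "last P \<in> YV" using P(4) wY(1)[OF k] by simp
    ultimately obtain v where v: "v \<in> set P" "v \<in> nbhd V E M S" using S(4)[OF P(1)] by blast
    obtain s where s: "s \<in> S" "gdist E s v < M" using v(2) unfolding nbhd_def by blast
    have "gdist E (w k) v \<le> 3 * M" "v \<in> V" using P(5)[OF v(1)] wY(4)[OF k] by auto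
    then show ?thesis using s by blast
  qed
  have "\<forall>k. \<exists>s. k \<le> n \<longrightarrow> s \<in> S \<and> (\<exists>v\<in>V. gdist E s v < M \<and> gdist E (w k) v \<le> 3 * M)"
    using hit by blast
  then obtain h where h: "\<And>k. k \<le> n \<Longrightarrow> h k \<in> S \<and> (\<exists>v\<in>V. gdist E (h k) v < M \<and> gdist E (w k) v \<le> 3 * M)"
    by metis
  have inj: "inj_on h {..n}"
  proof (rule inj_onI, rule ccontr)
    fix k l assume kl: "k \<in> {..n}" "l \<in> {..n}" "h k = h l" "k \<noteq> l"
    have kn: "k \<le> n" "l \<le> n" using kl by auto
    obtain vk where vk: "vk \<in> V" "gdist E (h k) vk < M" "gdist E (w k) vk \<le> 3 * M" using h[OF kn(1)] by blast
    obtain vl where vl: "vl \<in> V" "gdist E (h l) vl < M" "gdist E (w l) vl \<le> 3 * M" using h[OF kn(2)] by blast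
    define s where "s = h k"
    have sV: "s \<in> V" using h[OF kn(1)] S(1) unfolding s_def by blast
    have wkV: "w k \<in> V" and wlV: "w l \<in> V" using wY(2) kn by auto
    have "gdist E (w k) (w l) \<le> gdist E (w k) vk + gdist E vk (w l)" using gt[OF wkV vk(1) wlV] .
    moreover have "gdist E vk (w l) \<le> gdist E vk s + gdist E s (w l)" using gt[OF vk(1) sV wlV] .
    moreover have "gdist E s (w l) \<le> gdist E s vl + gdist E vl (w l)" using gt[OF sV vl(1) wlV] .
    moreover have "gdist E vk s = gdist E s vk" using gs[OF vk(1) sV] .
    moreover have "gdist E vl (w l) = gdist E (w l) vl" using gs[OF vl(1) wlV] .
    moreover have "8 * M < gdist E (w k) (w l)" using sep[OF kn kl(4)] .
    moreover have "gdist E s vl < M" using vl(2) kl(3) unfolding s_def by simp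
    ultimately show False using vk(2,3) vl(3) unfolding s_def by linarith
  qed
  have "h ` {..n} \<subseteq> S" using h by auto
  from card_inj_on_le[OF inj this S(2)] have "card {..n} \<le> card S" .
  then show False using S(3) by simp
qed


lemma block_diam:
  assumes BV: "B \<in> skel_V V E x0 M M" and xB: "x \<in> B" and yB: "y \<in> B"
  shows "gdist E x y \<le> 9 * M * n + 4 * M"
proof -
  note rV = rV[OF G M1 x0V] and sE = sE[OF G M1 x0V] and gs = gs[OF G M1 x0V] and gt = gt[OF G M1 x0V]
    and walkV = walkV[OF G M1 x0V]
  obtain N where BL: "B \<subseteq> layer V E x0 M N" and kc: "k_connected E M B"
    using BV unfolding skel_V_def is_block_def by blast
  have lvB: "z \<in> V \<and> N * int M < int (gdist E z x0) \<and> int (gdist E z x0) \<le> (N + 1) * int M" if "z \<in> B" for z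
    using BL that unfolding layer_def by blast
  have xV: "x \<in> V" and yV: "y \<in> V" using lvB xB yB by auto
  have tri: "gdist E x y \<le> gdist E x x0 + gdist E y x0"
    using gt[OF xV x0V yV] gs[OF x0V yV] by simp
  show ?thesis
  proof (cases "N \<le> 1")
    case True
    have "(N + 1) * int M \<le> 2 * int M" using True by (intro mult_right_mono) auto
    then have "gdist E x x0 \<le> 2 * M" "gdist E y x0 \<le> 2 * M" using lvB[OF xB] lvB[OF yB] by linarith+
    then show ?thesis using tri by linarith
  next
    case False
    define a where "a = nat ((N - 2) * int M)"
    have nn: "0 \<le> (N - 2) * int M" using False by simp
    have ia: "int a = N * int M - 2 * int M" unfolding a_def using nn
      by (simp add: algebra_simps)
    have bB: "a + 2 * M < gdist E z x0 \<and> gdist E z x0 \<le> a + 3 * M \<and> z \<in> V" if "z \<in> B" for z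
    proof -
      have "N * int M < int (gdist E z x0)" "int (gdist E z x0) \<le> N * int M + int M" "z \<in> V"
        using lvB[OF that] by (auto simp: algebra_simps)
      then show ?thesis using ia by linarith
    qed
    show ?thesis
    proof (rule ccontr)
      assume "\<not> ?thesis"
      then have big: "9 * M * n + 4 * M < gdist E x y" by simp
      define U where "U = {v\<in>V. a + M < gdist E v x0}"
      obtain zs where zs: "zs \<noteq> []" "hd zs = x" "last zs = y" "set zs \<subseteq> B"
        "successively (\<lambda>u v. gdist E u v \<le> M) zs"
        using kc xB yB unfolding k_connected_def by blast
      have zsV: "set zs \<subseteq> V" using zs(4) bB by blast
      have step: "successively (\<lambda>u v. gdist E x v \<le> gdist E x u + M) zs"
      proof (rule successively_mono[OF zs(5)])
        fix u v assume "u \<in> set zs" "v \<in> set zs" "gdist E u v \<le> M"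
        moreover have "gdist E x v \<le> gdist E x u + gdist E u v"
          using gt[OF xV] zsV \<open>u \<in> set zs\<close> \<open>v \<in> set zs\<close> by blast
        ultimately show "gdist E x v \<le> gdist E x u + M" by linarith
      qed
      have wex: "\<exists>z\<in>set zs. 9 * M * k \<le> gdist E x z \<and> gdist E x z < 9 * M * k + M" if k: "k \<le> n" for k
      proof (rule disc_ivt[OF step zs(1)])
        show "gdist E x (hd zs) \<le> 9 * M * k" using zs(2) gdist_refl[of E x] by simp
        have "9 * M * k \<le> 9 * M * n" using k by simp
        then show "9 * M * k \<le> gdist E x (last zs)" unfolding zs(3) using big by linarith
        show "0 < M" using M1 by simp
      qed
      have "\<forall>k. \<exists>z. k \<le> n \<longrightarrow> z \<in> set zs \<and> 9 * M * k \<le> gdist E x z \<and> gdist E x z < 9 * M * k + M"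
        using wex by blast
      then obtain w where w: "\<And>k. k \<le> n \<Longrightarrow> w k \<in> set zs \<and> 9 * M * k \<le> gdist E x (w k) \<and> gdist E x (w k) < 9 * M * k + M"
        by metis
      have reachall: "set zs \<subseteq> {v. reach (E \<inter> U \<times> U) x v}"
      proof (rule succ_closed[OF zs(5,1)])
        show "hd zs \<in> {v. reach (E \<inter> U \<times> U) x v}" using zs(2) reach_refl by simp
        fix u v assume uv: "u \<in> set zs" "v \<in> set zs" "gdist E u v \<le> M" "u \<in> {v. reach (E \<inter> U \<times> U) x v}"
        have uV: "u \<in> V" and vV: "v \<in> V" using uv zsV by auto
        have lu: "a + 2 * M < gdist E u x0" using bB uv(1) zs(4) by blast
        obtain ws where ws: "is_walk E ws" "hd ws = u" "last ws = v" "length ws = Suc (gdist E u v)"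
          using gdist_wit[OF rV[OF uV vV]] by blast
        have wsV: "set ws \<subseteq> V" using walkV[OF ws(1)] ws(2) uV by simp
        have "set ws \<subseteq> U"
        proof
          fix z assume zw: "z \<in> set ws"
          then obtain j where j: "j < length ws" "ws ! j = z" by (auto simp: in_set_conv_nth)
          have d: "gdist E u z \<le> M" using geodesic(1)[OF ws j(1)] j ws(4) uv(3) by simp
          have zV: "z \<in> V" using zw wsV by blast
          have "gdist E u x0 \<le> gdist E u z + gdist E z x0" using gt[OF uV zV x0V] .
          then show "z \<in> U" unfolding U_def using d lu zV by simp
        qed
        then have "is_walk (E \<inter> U \<times> U) ws" by (rule walk_restrict[OF ws(1)])
        then have "reach (E \<inter> U \<times> U) u v" unfolding reach_def using ws by blast
        then show "v \<in> {v. reach (E \<inter> U \<times> U) x v}" using uv(4) reach_trans by fastforce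
      qed
      have wprop: "w k \<in> B \<and> w k \<in> V \<and> reach (E \<inter> U \<times> U) x (w k)" if "k \<le> n" for k
        using w[OF that] zs(4) zsV reachall by blast
      have sepl: "8 * M < gdist E (w k) (w l)" if kl: "k \<le> n" "l \<le> n" "k < l" for k l
      proof -
        have "9 * M * (k + 1) \<le> 9 * M * l" using kl(3) by (intro mult_le_mono2) simp
        then have m: "9 * M * k + 9 * M \<le> 9 * M * l" by (simp add: algebra_simps)
        have "gdist E x (w l) \<le> gdist E x (w k) + gdist E (w k) (w l)"
          using gt[OF xV] wprop kl by blast
        then show ?thesis using w[OF kl(1)] w[OF kl(2)] m by linarith
      qed
      show False
      proof (rule no_spread[OF U_def xV])
        show "a + M < gdist E x x0" using bB[OF xB] by simp
        fix k assume k: "k \<le> n"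
        show "reach (E \<inter> U \<times> U) x (w k) \<and> gdist E (w k) x0 \<le> a + 3 * M"
          using wprop[OF k] bB by blast
      next
        fix k l assume kl: "k \<le> n" "l \<le> n" "k \<noteq> l"
        show "8 * M < gdist E (w k) (w l)"
        proof (cases "k < l")
          case True then show ?thesis using sepl kl by blast
        next
          case False
          then have "l < k" using kl(3) by simp
          then have "8 * M < gdist E (w l) (w k)" using sepl kl by blast
          then show ?thesis using gs wprop kl by metis
        qed
      qed
    qed
  qed
qed

end


theorem theorem1:
  fixes V :: "'a set" and E :: "('a \<times> 'a) set" and M n :: nat and x0 :: 'a
  assumes "graph V E"
    and "M \<ge> 1"
    and "fat_bottlenecked V E M n"
    and "x0 \<in> V"
  shows "quasi_isometry V E (skel_V V E x0 M M) (skel_E V E x0 M M) (skel_map V E x0 M M)"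
  by (rule qi_from_diam[OF assms(1,2,4)]) (rule block_diam[OF assms(1,2,4,3)])

end
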